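(* Let $\mathbf L=(L,\vee,\wedge,0,1)$ be a complemented lattice with $0\ne1$ and $a,b,c\in L$. Then: (i) $0\odot a=a\odot0=\{0\}$; (ii) $1\odot a=a\odot1=\{a\}$; (iii) $\{a\wedge b\}\le a\odot b\le\{b\}$, and if $b\le a$ then $a\odot b=\{b\}$; (iv) if $a\le b$ then $a\odot c\le_i b\odot c$ for $i=1,2$; (v) if $\mathbf L$ is modular, then $a\le b$ if and only if $a\odot b=\{a\}$, and moreover $(a\odot b)\odot b=a\odot b$.
   Context: For $a\in L$, $a^+:=\{x\in L\mid a\vee x=1,\ a\wedge x=0\}$ (the set of all complements of $a$); for $B\subseteq L$, $B^+:=\{x\in L\mid b\vee x=1\text{ and }b\wedge x=0\text{ for all }b\in B\}$. For $A,B\subseteq L$: $A\vee B:=\{x\vee y\mid x\in A,y\in B\}$, $A\wedge B:=\{x\wedge y\mid x\in A,y\in B\}$; $A\le B$ means $x\le y$ for all $x\in A,y\in B$; $A\le_1B$ means for every $x\in A$ there is $y\in B$ with $x\le y$; $A\le_2B$ means for every $y\in B$ there is $x\in A$ with $x\le y$. Singletons are identified with their elements. Define $a\odot b:=\{b\}\wedge(\{a\}\vee b^+)=\{b\wedge(a\vee x)\mid x\in b^+\}$ and, for $A,B\subseteq L$, $A\odot B:=B\wedge(A\vee B^+)$. *)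

theory Defs
  imports Main
begin

definition complemented :: "'a::bounded_lattice itself \<Rightarrow> bool" where
  "complemented _ \<longleftrightarrow> (\<forall>x::'a. \<exists>y. sup x y = top \<and> inf x y = bot)"

definition modular_lattice :: "'a::lattice itself \<Rightarrow> bool" where
  "modular_lattice _ \<longleftrightarrow> (\<forall>x y z::'a. x \<le> z \<longrightarrow> sup x (inf y z) = inf (sup x y) z)"

definition compls :: "'a::bounded_lattice \<Rightarrow> 'a set" where
  "compls a = {x. sup a x = top \<and> inf a x = bot}"

definition set_compls :: "'a::bounded_lattice set \<Rightarrow> 'a set" where
  "set_compls B = {x. \<forall>b\<in>B. sup b x = top \<and> inf b x = bot}"

definition set_sup :: "'a::lattice set \<Rightarrow> 'a set \<Rightarrow> 'a set" where
  "set_sup A B = {sup x y | x y. x \<in> A \<and> y \<in> B}"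

definition set_inf :: "'a::lattice set \<Rightarrow> 'a set \<Rightarrow> 'a set" where
  "set_inf A B = {inf x y | x y. x \<in> A \<and> y \<in> B}"

definition set_le :: "'a::order set \<Rightarrow> 'a set \<Rightarrow> bool" where
  "set_le A B \<longleftrightarrow> (\<forall>x\<in>A. \<forall>y\<in>B. x \<le> y)"

definition set_le1 :: "'a::order set \<Rightarrow> 'a set \<Rightarrow> bool" where
  "set_le1 A B \<longleftrightarrow> (\<forall>x\<in>A. \<exists>y\<in>B. x \<le> y)"

definition set_le2 :: "'a::order set \<Rightarrow> 'a set \<Rightarrow> bool" where
  "set_le2 A B \<longleftrightarrow> (\<forall>y\<in>B. \<exists>x\<in>A. x \<le> y)"

definition odot :: "'a::bounded_lattice \<Rightarrow> 'a \<Rightarrow> 'a set" where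
  "odot a b = set_inf {b} (set_sup {a} (compls b))"

definition odot_set :: "'a::bounded_lattice set \<Rightarrow> 'a set \<Rightarrow> 'a set" where
  "odot_set A B = set_inf B (set_sup A (set_compls B))"

end

theory Submission
  imports Defs
begin

lemma odot_eq: "odot a b = {inf b (sup a x) | x. x \<in> compls b}"
  unfolding odot_def set_inf_def set_sup_def by blast

lemma compls_ne:
  fixes b :: "'a::bounded_lattice"
  assumes "complemented TYPE('a)"
  shows "\<exists>x. x \<in> compls b"
  using assms unfolding complemented_def compls_def by blast

lemma compls_top: "compls (top::'a::bounded_lattice) = {bot}"
  unfolding compls_def by (auto simp: sup_absorb1 inf_absorb2)
  
lemma compls_bot: "compls (bot::'a::bounded_lattice) = {top}"
  unfolding compls_def by (auto simp: sup_absorb2)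

theorem proposition6:
  fixes a b c :: "'a::bounded_lattice"
  assumes compl: "complemented TYPE('a)"
    and nontriv: "(bot::'a) \<noteq> top"
  shows "(odot bot a = {bot} \<and> odot a bot = {bot})
    \<and> (odot top a = {a} \<and> odot a top = {a})
    \<and> (set_le {inf a b} (odot a b) \<and> set_le (odot a b) {b}
         \<and> (b \<le> a \<longrightarrow> odot a b = {b}))
    \<and> (a \<le> b \<longrightarrow> set_le1 (odot a c) (odot b c) \<and> set_le2 (odot a c) (odot b c))
    \<and> (modular_lattice TYPE('a) \<longrightarrow>
           ((a \<le> b \<longleftrightarrow> odot a b = {a}) \<and> odot_set (odot a b) {b} = odot a b))"
proof -
  have ne: "\<And>y::'a. \<exists>x. x \<in> compls y" using compls_ne[OF compl] by blast
  have i1: "odot bot a = {bot}"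
  proof -
    obtain x where "x \<in> compls a" using ne by blast
    then show ?thesis unfolding odot_eq compls_def by auto (metis)
  qed
  have i2: "odot a bot = {bot}" unfolding odot_eq compls_bot by auto
  have ii1: "odot top a = {a}"
  proof -
    obtain x where "x \<in> compls a" using ne by blast
    then show ?thesis unfolding odot_eq by auto
  qed
  have ii2: "odot a top = {a}" unfolding odot_eq compls_top by auto
  have iii: "set_le {inf a b} (odot a b) \<and> set_le (odot a b) {b}
         \<and> (b \<le> a \<longrightarrow> odot a b = {b})"
  proof -
    obtain x where x: "x \<in> compls b" using ne by blast
    have "set_le {inf a b} (odot a b)" unfolding set_le_def odot_eq
      by (auto intro: le_infI1 le_supI1 inf_le1 order_trans[OF inf_le1 sup_ge1])
    moreover have "set_le (odot a b) {b}" unfolding set_le_def odot_eq by auto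
    moreover have "b \<le> a \<longrightarrow> odot a b = {b}"
    proof
      assume "b \<le> a"
      then have "\<And>y. inf b (sup a y) = b" by (simp add: inf_absorb1 le_supI1)
      then show "odot a b = {b}" using x unfolding odot_eq by auto
    qed
    ultimately show ?thesis by blast
  qed
  have iv: "a \<le> b \<longrightarrow> set_le1 (odot a c) (odot b c) \<and> set_le2 (odot a c) (odot b c)"
  proof
    assume ab: "a \<le> b"
    have m: "\<And>x. inf c (sup a x) \<le> inf c (sup b x)" using ab
      by (meson inf_mono order_refl sup_mono)
    show "set_le1 (odot a c) (odot b c) \<and> set_le2 (odot a c) (odot b c)"
      unfolding set_le1_def set_le2_def odot_eq using m by blast
  qed
  have v: "modular_lattice TYPE('a) \<longrightarrow>
           ((a \<le> b \<longleftrightarrow> odot a b = {a}) \<and> odot_set (odot a b) {b} = odot a b)"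
  proof
    assume mod: "modular_lattice TYPE('a)"
    have M: "\<And>x y z::'a. x \<le> z \<Longrightarrow> sup x (inf y z) = inf (sup x y) z"
      using mod unfolding modular_lattice_def by blast
    obtain x0 where x0: "x0 \<in> compls b" using ne by blast
    have key: "\<And>y x. y \<le> b \<Longrightarrow> x \<in> compls b \<Longrightarrow> inf b (sup y x) = y"
    proof -
      fix y x assume "y \<le> b" "x \<in> compls b"
      then have "sup y (inf x b) = inf (sup y x) b" using M by blast
      moreover have "inf x b = bot" using \<open>x \<in> compls b\<close> unfolding compls_def
        by (simp add: inf_commute)
      ultimately show "inf b (sup y x) = y" by (simp add: inf_commute)
    qed
    have "a \<le> b \<longleftrightarrow> odot a b = {a}"
    proof
      assume "a \<le> b"
      then show "odot a b = {a}" using key x0 unfolding odot_eq by auto metis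
    next
      assume "odot a b = {a}"
      then have "a \<in> odot a b" by simp
      then show "a \<le> b" unfolding odot_eq by (auto, metis inf.cobounded1)
    qed
    moreover have "odot_set (odot a b) {b} = odot a b"
    proof -
      have sc: "set_compls {b} = compls b" unfolding set_compls_def compls_def by auto
      have le: "\<And>y. y \<in> odot a b \<Longrightarrow> y \<le> b" unfolding odot_eq by auto
      have "odot_set (odot a b) {b} = {inf b (sup y x) | y x. y \<in> odot a b \<and> x \<in> compls b}"
        unfolding odot_set_def set_inf_def set_sup_def sc by blast
      also have "\<dots> = {y | y x. y \<in> odot a b \<and> x \<in> compls b}"
        using key le by (metis (no_types, opaque_lifting))
      also have "\<dots> = odot a b" using x0 by blast
      finally show ?thesis .
    qed
    ultimately show "(a \<le> b \<longleftrightarrow> odot a b = {a}) \<and> odot_set (odot a b) {b} = odot a b" by blast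
  qed
  show ?thesis using i1 i2 ii1 ii2 iii iv v by blast
qed

end
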